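(* Fix $N>0$, $R>0$, $\bar\rho>0$ and $0<\gamma<N$. Consider, for each blocklength $n$, a decoder $\mathcal{D}$ with disjoint decoding regions $D_w=\{\mathbf{y}:\mathcal{D}(\mathbf{y})=w\}$ for the channel $\mathbf{y}=\mathbf{x}(w)+\mathbf{z}$, $\mathbf{z}\sim\mathcal{N}(\mathbf{0},N\mathbf{I}_n)$, and numbers $p_n\to0$. Suppose that for some $\rho=\rho_n\in[0,\bar\rho]$ there are at least $e^{n(R-\gamma)}$ codewords $\mathbf{x}(w)$ lying in the shell $\mathcal{T}_n(\mathbf{0},\sqrt{n\rho},\sqrt{n\rho}+\gamma)$, each with error probability $\mathbb{P}(\mathbf{x}(w)+\mathbf{z}\notin D_w)\le(2/\gamma)p_n$. Then for all sufficiently large $n$, the union of the decoding regions of these codewords intersected with the noise-inflated shell $\mathcal{T}_n\big(\mathbf{0},\sqrt{n(\rho+N-\gamma)},\sqrt{n(\rho+N+\gamma)}\big)$ has volume at least $$V_{\text{MIN}}=e^{n(R-\gamma)}\frac{(n\pi(N-\gamma))^{n/2}}{\Gamma\left(\frac n2+1\right)}.$$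
   Context: $\mathcal{T}_n(\mathbf{a},r_1,r_2)=\{\mathbf{x}\in\mathbb{R}^n: r_1\le\|\mathbf{x}-\mathbf{a}\|\le r_2\}$ denotes a spherical shell; volume means $n$-dimensional Lebesgue measure; $\Gamma$ is the gamma function. *)

theory Defs
  imports "HOL-Probability.Probability"
begin

text \<open>Vectors of R^n are modelled as extensional functions nat => real on {..<n}.\<close>

definition Leb_n :: "nat \<Rightarrow> (nat \<Rightarrow> real) measure" where
  "Leb_n n = PiM {..<n} (\<lambda>_. lborel)"

text \<open>Noise z ~ N(0, N I_n): i.i.d. Gaussian coordinates with variance N.\<close>
definition gauss_n :: "real \<Rightarrow> nat \<Rightarrow> (nat \<Rightarrow> real) measure" where
  "gauss_n N n = PiM {..<n} (\<lambda>_. density lborel (normal_density 0 (sqrt N)))"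

definition vnorm :: "nat \<Rightarrow> (nat \<Rightarrow> real) \<Rightarrow> real" where
  "vnorm n x = sqrt (\<Sum>i<n. (x i)\<^sup>2)"

definition shell :: "nat \<Rightarrow> (nat \<Rightarrow> real) \<Rightarrow> real \<Rightarrow> real \<Rightarrow> (nat \<Rightarrow> real) set" where
  "shell n a r1 r2 = {x \<in> space (Leb_n n). r1 \<le> vnorm n (\<lambda>i. x i - a i) \<and> vnorm n (\<lambda>i. x i - a i) \<le> r2}"

definition dec_region :: "nat \<Rightarrow> ((nat \<Rightarrow> real) \<Rightarrow> 'm) \<Rightarrow> 'm \<Rightarrow> (nat \<Rightarrow> real) set" where
  "dec_region n dec w = {y \<in> space (Leb_n n). dec y = w}"

definition err_prob :: "real \<Rightarrow> nat \<Rightarrow> ((nat \<Rightarrow> real) \<Rightarrow> 'm) \<Rightarrow> (nat \<Rightarrow> real) \<Rightarrow> 'm \<Rightarrow> real" where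
  "err_prob N n dec c w = measure (gauss_n N n)
     {z \<in> space (gauss_n N n). restrict (\<lambda>i. c i + z i) {..<n} \<notin> dec_region n dec w}"

end

theory Submission
  imports Defs
begin


lemma Gamma_lower:
  fixes a :: real assumes "a > 0"
  shows "a powr a * exp (-(a+1)) \<le> Gamma (a+1)"
proof -
  have "ennreal (a powr a * exp (-(a+1))) = (\<integral>\<^sup>+t. ennreal (a powr a * exp (-(a+1))) * indicator {a..a+1} t \<partial>lborel)"
    by (simp add: nn_integral_cmult_indicator)
  also have "\<dots> \<le> (\<integral>\<^sup>+t. ennreal (indicator {0..} t * t powr (a + 1 - 1) / exp t) \<partial>lborel)"
  proof (intro nn_integral_mono)
    fix t :: real
    show "ennreal (a powr a * exp (-(a+1))) * indicator {a..a+1} t \<le> ennreal (indicator {0..} t * t powr (a + 1 - 1) / exp t)"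
    proof (cases "t \<in> {a..a+1}")
      case True
      then have t: "a \<le> t" "t \<le> a + 1" by auto
      have "a powr a \<le> t powr a" using t assms by (intro powr_mono2) auto
      moreover have "exp (-(a+1)) \<le> 1 / exp t" proof -
        have "1 / exp t = exp (-t)" by (simp add: exp_minus field_simps)
        then show ?thesis using t by simp
      qed
      ultimately have "a powr a * exp (-(a+1)) \<le> t powr a * (1 / exp t)"
        by (intro mult_mono) auto
      then show ?thesis using True t assms by (auto intro!: ennreal_leI)
    qed auto
  qed
  also have "\<dots> = ennreal (Gamma (a+1))"
    using Gamma_conv_nn_integral_real[of "a+1"] assms by simp
  finally show ?thesis using assms by (subst (asm) ennreal_le_iff) auto
qed



lemma vol_gauss_bound:
  fixes N \<gamma> :: real
  assumes "0<\<gamma>" "\<gamma><N" "n>0"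
  shows "(real n * pi * (N - \<gamma>)) powr (real n / 2) / Gamma (real n / 2 + 1) *
    ((1/sqrt(2*pi*N))^n * exp (-(real n * (N - \<gamma>/2))/(2*N))) \<le> exp (1 - real n * \<gamma> / (4*N))"
proof -
  define a where "a = real n / 2"
  have a: "a > 0" using assms by (simp add: a_def)
  have N: "N > 0" using assms by simp
  have e1: "(real n * pi * (N - \<gamma>)) powr (real n / 2) = exp (a * ln a + a * ln (2*pi*(N-\<gamma>)))"
  proof -
    have "real n * pi * (N - \<gamma>) = a * (2*pi*(N-\<gamma>))" by (simp add: a_def)
    then have "(real n * pi * (N - \<gamma>)) powr (real n / 2) = (a * (2*pi*(N-\<gamma>))) powr a"
      by (simp add: a_def mult.assoc)
    also have "\<dots> = exp (a * ln (a * (2*pi*(N-\<gamma>))))" using a assms by (simp add: powr_def)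
    also have "\<dots> = exp (a * ln a + a * ln (2*pi*(N-\<gamma>)))" using a assms
      by (simp add: ln_mult distrib_left)
    finally show ?thesis .
  qed
  have e2: "a powr a * exp (-(a+1)) = exp (a * ln a - a - 1)"
    using a by (simp add: powr_def exp_diff exp_minus field_simps exp_add)
  have e3: "(1/sqrt(2*pi*N))^n = exp (- a * ln (2*pi*N))"
  proof -
    have "(1/sqrt(2*pi*N))^n = (1/sqrt(2*pi*N)) powr (real n)"
      using N by (simp add: powr_realpow)
    also have "\<dots> = exp (- a * ln (2*pi*N))"
      using N by (simp add: powr_def ln_div ln_sqrt a_def)
    finally show ?thesis .
  qed
  have G: "exp (a * ln a - a - 1) \<le> Gamma (a + 1)" using Gamma_lower[OF a] e2 by simp
  have Gp: "0 < exp (a * ln a - a - 1)" by simp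
  have "(real n * pi * (N - \<gamma>)) powr (real n / 2) / Gamma (real n / 2 + 1)
      \<le> exp (a * ln a + a * ln (2*pi*(N-\<gamma>))) / exp (a * ln a - a - 1)"
    unfolding e1 unfolding a_def[symmetric] using G Gp a by (intro divide_left_mono) auto
  also have "\<dots> = exp (a * ln (2*pi*(N-\<gamma>)) + a + 1)" by (simp add: exp_diff[symmetric])
  finally have V: "(real n * pi * (N - \<gamma>)) powr (real n / 2) / Gamma (real n / 2 + 1) \<le> exp (a * ln (2*pi*(N-\<gamma>)) + a + 1)" .
  have lnq: "ln (2*pi*(N-\<gamma>)) - ln (2*pi*N) \<le> - \<gamma> / N"
  proof -
    have "ln (2*pi*(N-\<gamma>)) - ln (2*pi*N) = ln ((2*pi*(N-\<gamma>)) / (2*pi*N))"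
      using assms by (subst ln_div) auto
    also have "(2*pi*(N-\<gamma>)) / (2*pi*N) = 1 + (- \<gamma>/N)" using assms by (simp add: field_simps)
    finally have "ln (2*pi*(N-\<gamma>)) - ln (2*pi*N) = ln (1 + (- \<gamma>/N))" .
    also have "\<dots> \<le> - \<gamma>/N" using assms by (intro ln_add_one_self_le_self2) (auto simp: field_simps)
    finally show ?thesis .
  qed
  have "(real n * pi * (N - \<gamma>)) powr (real n / 2) / Gamma (real n / 2 + 1) *
    ((1/sqrt(2*pi*N))^n * exp (-(real n * (N - \<gamma>/2))/(2*N)))
    \<le> exp (a * ln (2*pi*(N-\<gamma>)) + a + 1) * (exp (- a * ln (2*pi*N)) * exp (-(real n * (N - \<gamma>/2))/(2*N)))"
    unfolding e3 by (intro mult_right_mono V) auto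
  also have "\<dots> = exp (a * (ln (2*pi*(N-\<gamma>)) - ln (2*pi*N)) + 1 + a * \<gamma> / N / 2)"
    using N by (simp add: exp_add[symmetric] a_def field_simps)
  also have "\<dots> \<le> exp (a * (- \<gamma> / N) + 1 + a * \<gamma> / N / 2)"
  proof -
    have "a * (ln (2*pi*(N-\<gamma>)) - ln (2*pi*N)) \<le> a * (- \<gamma> / N)" using lnq a by (intro mult_left_mono) auto
    moreover have "a * \<gamma> / N = a*\<gamma>/(N*2) + \<gamma>*a/(2*N)" using N by (simp add: field_simps)
    ultimately show ?thesis by (simp; linarith)
  qed
  also have "\<dots> = exp (1 - real n * \<gamma> / (4*N))" by (simp add: a_def field_simps)
  finally show ?thesis .
qed



lemma gauss_pointwise:
  fixes N s a u :: real
  assumes N: "N > 0" and k: "1 - 2 * s * N > 0"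
  shows "normal_density 0 (sqrt N) u * exp (s * (a+u)^2) =
    (exp (s * a^2/(1-2 * s * N)) / sqrt (1-2 * s * N)) * normal_density (2 * s * N*a/(1-2 * s * N)) (sqrt (N/(1-2 * s * N))) u"
proof -
  define k where "k = 1 - 2 * s * N"
  have kp: "k > 0" using k by (simp add: k_def)
  have sq: "sqrt (2 * pi * (sqrt (N/k))\<^sup>2) = sqrt (2*pi*N) / sqrt k"
  proof -
    have "(sqrt (N/k))\<^sup>2 = N/k" using N kp by simp
    moreover have "2*pi*(N/k) = (2*pi*N)/k" by simp
    ultimately show ?thesis by (simp only: real_sqrt_divide)
  qed
  have ex: "- (u - 0)\<^sup>2 / (2 * (sqrt N)\<^sup>2) + s * (a+u)^2 = s * a^2/k + (-(u - 2 * s * N*a/k)\<^sup>2 / (2 * (sqrt (N/k))\<^sup>2))"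
  proof -
    have e1: "(sqrt N)\<^sup>2 = N" "(sqrt (N/k))\<^sup>2 = N/k" using N kp by auto
    have "- (u - 0)\<^sup>2 / (2 * N) + s * (a+u)^2 - (s*a^2/k + (-(u - 2 * s * N*a/k)\<^sup>2 / (2 * (N/k))))
      = ((k * (- (u^2)) + 2*N*k * s * (a+u)^2) - (2*N * s * a^2 - (k*u - 2 * s * N*a)^2)) / (2*N*k)"
      using N kp by (simp add: field_simps power2_eq_square)
    also have "(k * (- (u^2)) + 2*N*k * s * (a+u)^2) - (2*N * s * a^2 - (k*u - 2 * s * N*a)^2) = 0"
      unfolding k_def by algebra
    finally show ?thesis unfolding e1 by simp
  qed
  have "normal_density 0 (sqrt N) u * exp (s * (a+u)^2) = 1 / sqrt (2*pi*N) * exp (- (u - 0)\<^sup>2 / (2 * (sqrt N)\<^sup>2) + s * (a+u)^2)"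
    using N by (simp add: normal_density_def exp_add[symmetric])
  also have "\<dots> = 1 / sqrt (2*pi*N) * exp (s * a^2/k) * exp (-(u - 2 * s * N*a/k)\<^sup>2 / (2 * (sqrt (N/k))\<^sup>2))"
    unfolding ex by (simp add: exp_add[symmetric])
  also have "\<dots> = (exp (s * a^2/k) / sqrt k) * normal_density (2 * s * N*a/k) (sqrt (N/k)) u"
    unfolding normal_density_def sq using N kp by (simp add: field_simps)
  finally show ?thesis by (simp add: k_def)
qed

lemma mgf1:
  fixes N s a :: real
  assumes N: "N > 0" and k: "1 - 2 * s * N > 0"
  shows "(\<integral>\<^sup>+u. ennreal (exp (s * (a+u)^2)) \<partial>density lborel (normal_density 0 (sqrt N)))
     = ennreal (exp (s * a^2/(1-2 * s * N)) / sqrt (1-2 * s * N))"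
proof -
  let ?C = "exp (s * a^2/(1-2 * s * N)) / sqrt (1-2 * s * N)"
  let ?m = "2 * s * N*a/(1-2 * s * N)" and ?v = "sqrt (N/(1-2 * s * N))"
  have "(\<integral>\<^sup>+u. ennreal (exp (s * (a+u)^2)) \<partial>density lborel (normal_density 0 (sqrt N)))
      = (\<integral>\<^sup>+u. ennreal (normal_density 0 (sqrt N) u) * ennreal (exp (s * (a+u)^2)) \<partial>lborel)"
    by (subst nn_integral_density) auto
  also have "\<dots> = (\<integral>\<^sup>+u. ennreal ?C * ennreal (normal_density ?m ?v u) \<partial>lborel)"
  proof (intro nn_integral_cong)
    fix u :: real
    have "ennreal (normal_density 0 (sqrt N) u) * ennreal (exp (s * (a+u)^2)) = ennreal (normal_density 0 (sqrt N) u * exp (s * (a+u)^2))"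
      by (rule ennreal_mult'[symmetric]) simp
    also have "\<dots> = ennreal (?C * normal_density ?m ?v u)" by (simp only: gauss_pointwise[OF N k])
    also have "\<dots> = ennreal ?C * ennreal (normal_density ?m ?v u)" by (rule ennreal_mult') (use k in simp)
    finally show "ennreal (normal_density 0 (sqrt N) u) * ennreal (exp (s * (a+u)^2)) = ennreal ?C * ennreal (normal_density ?m ?v u)" .
  qed
  also have "\<dots> = ennreal ?C * (\<integral>\<^sup>+u. ennreal (normal_density ?m ?v u) \<partial>lborel)"
    by (subst nn_integral_cmult) auto
  also have "(\<integral>\<^sup>+u. ennreal (normal_density ?m ?v u) \<partial>lborel) = 1"
    using prob_space.emeasure_space_1[OF prob_space_normal_density[where \<mu>="?m" and \<sigma>="?v"]]
    using N k by (simp add: emeasure_density)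
  finally show ?thesis by simp
qed



lemma sf_gauss: "N > 0 \<Longrightarrow> sigma_finite_measure (density lborel (normal_density 0 (sqrt N)))"
  by (intro prob_space_imp_sigma_finite prob_space_normal_density) simp

lemma psf_gauss: "N > 0 \<Longrightarrow> product_sigma_finite (\<lambda>_::nat. density lborel (normal_density 0 (sqrt N)))"
  unfolding product_sigma_finite_def using sf_gauss by blast

lemma psf_lborel: "product_sigma_finite (\<lambda>_::nat. (lborel :: real measure))"
  unfolding product_sigma_finite_def using sigma_finite_lborel by blast

lemma mgf_n:
  fixes N s :: real and c :: "nat \<Rightarrow> real"
  assumes N: "N > 0" and k: "1 - 2 * s * N > 0"
  shows "(\<integral>\<^sup>+z. ennreal (exp (s * (\<Sum>i<n. (c i + z i)^2))) \<partial>gauss_n N n)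
     = ennreal (exp (s * (\<Sum>i<n. (c i)^2) / (1 - 2 * s * N)) / sqrt (1 - 2 * s * N) ^ n)"
proof -
  interpret P: product_sigma_finite "\<lambda>_::nat. density lborel (normal_density 0 (sqrt N))"
    by (rule psf_gauss[OF N])
  have "(\<integral>\<^sup>+z. ennreal (exp (s * (\<Sum>i<n. (c i + z i)^2))) \<partial>gauss_n N n)
    = (\<integral>\<^sup>+z. (\<Prod>i<n. ennreal (exp (s * (c i + z i)^2))) \<partial>gauss_n N n)"
    by (intro nn_integral_cong) (simp add: sum_distrib_left exp_sum prod_ennreal)
  also have "\<dots> = (\<Prod>i<n. (\<integral>\<^sup>+u. ennreal (exp (s * (c i + u)^2)) \<partial>density lborel (normal_density 0 (sqrt N))))"
    unfolding gauss_n_def by (rule P.product_nn_integral_prod) auto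
  also have "\<dots> = (\<Prod>i<n. ennreal (exp (s * (c i)^2 / (1 - 2 * s * N)) / sqrt (1 - 2 * s * N)))"
    using mgf1[OF N k] by simp
  also have "\<dots> = ennreal (\<Prod>i<n. exp (s * (c i)^2 / (1 - 2 * s * N)) / sqrt (1 - 2 * s * N))"
    by (rule prod_ennreal) (use k in simp)
  also have "(\<Prod>i<n. exp (s * (c i)^2 / (1 - 2 * s * N)) / sqrt (1 - 2 * s * N))
     = exp (s * (\<Sum>i<n. (c i)^2) / (1 - 2 * s * N)) / sqrt (1 - 2 * s * N) ^ n"
    by (simp add: prod_dividef exp_sum[symmetric] sum_distrib_left sum_divide_distrib)
  finally show ?thesis .
qed

lemma chernoff:
  fixes N s K :: real and c :: "nat \<Rightarrow> real"
  assumes N: "N > 0" and k: "1 - 2 * s * N > 0"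
    and A: "A \<in> sets (gauss_n N n)"
    and AK: "\<And>z. z \<in> A \<Longrightarrow> s * ((\<Sum>i<n. (c i + z i)^2) - K) \<ge> 0"
  shows "measure (gauss_n N n) A \<le> exp (s * (\<Sum>i<n. (c i)^2) / (1 - 2 * s * N) - s * K) / sqrt (1 - 2 * s * N) ^ n"
proof -
  have "emeasure (gauss_n N n) A = (\<integral>\<^sup>+z. indicator A z \<partial>gauss_n N n)" using A by simp
  also have "\<dots> \<le> (\<integral>\<^sup>+z. ennreal (exp (- s * K)) * ennreal (exp (s * (\<Sum>i<n. (c i + z i)^2))) \<partial>gauss_n N n)"
  proof (intro nn_integral_mono)
    fix z
    show "indicator A z \<le> ennreal (exp (- s * K)) * ennreal (exp (s * (\<Sum>i<n. (c i + z i)^2)))"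
    proof (cases "z \<in> A")
      case True
      have "1 \<le> exp (s * ((\<Sum>i<n. (c i + z i)^2) - K))" using AK[OF True] by simp
      also have "\<dots> = exp (- s * K) * exp (s * (\<Sum>i<n. (c i + z i)^2))"
        by (simp add: exp_add[symmetric] algebra_simps)
      finally show ?thesis using True by (simp add: ennreal_mult[symmetric] ennreal_1[symmetric] del: ennreal_1)
    qed simp
  qed
  also have "\<dots> = ennreal (exp (- s * K)) * (\<integral>\<^sup>+z. ennreal (exp (s * (\<Sum>i<n. (c i + z i)^2))) \<partial>gauss_n N n)"
    by (rule nn_integral_cmult) (simp add: gauss_n_def)
  also have "\<dots> = ennreal (exp (- s * K) * (exp (s * (\<Sum>i<n. (c i)^2) / (1 - 2 * s * N)) / sqrt (1 - 2 * s * N) ^ n))"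
    unfolding mgf_n[OF N k] using k by (simp add: ennreal_mult[symmetric])
  also have "exp (- s * K) * (exp (s * (\<Sum>i<n. (c i)^2) / (1 - 2 * s * N)) / sqrt (1 - 2 * s * N) ^ n)
    = exp (s * (\<Sum>i<n. (c i)^2) / (1 - 2 * s * N) - s * K) / sqrt (1 - 2 * s * N) ^ n"
    by (simp add: exp_diff exp_minus field_simps)
  finally have "emeasure (gauss_n N n) A \<le> ennreal (exp (s * (\<Sum>i<n. (c i)^2) / (1 - 2 * s * N) - s * K) / sqrt (1 - 2 * s * N) ^ n)" .
  then show ?thesis unfolding measure_def by (rule enn2real_leI[rotated]) (use k in simp)
qed



lemma sqrt_pow_exp: assumes "k > 0" shows "sqrt k ^ n = exp (real n * (ln k / 2))"
proof -
  have "sqrt k = exp (ln (sqrt k))" using assms by simp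
  also have "ln (sqrt k) = ln k / 2" using assms by (simp add: ln_sqrt)
  finally show ?thesis by (simp only: exp_of_nat_mult)
qed



lemma upper_tail:
  fixes N \<gamma> \<rho> \<rho>b :: real and c :: "nat \<Rightarrow> real"
  assumes N: "N > 0" and g: "\<gamma> > 0" and r: "0 \<le> \<rho>" "\<rho> \<le> \<rho>b"
    and C2: "(\<Sum>i<n. (c i)^2) \<le> real n * (\<rho> + \<gamma>/4)"
    and A: "A \<in> sets (gauss_n N n)"
    and AK: "\<And>z. z \<in> A \<Longrightarrow> real n * (\<rho> + N + \<gamma>) \<le> (\<Sum>i<n. (c i + z i)^2)"
  shows "measure (gauss_n N n) A \<le> exp (- real n * (\<gamma>^2 / (8 * (4*N*\<rho>b + 2*N*\<gamma> + 4*N^2))))"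
proof -
  define C where "C = 4*N*\<rho>b + 2*N*\<gamma> + 4*N^2"
  have Cp: "C > 0" using N g r unfolding C_def by (simp add: add_nonneg_pos)
  define s where "s = \<gamma> / (2*C)"
  have sp: "s > 0" using g Cp by (simp add: s_def)
  define x where "x = 2* s*N"
  have xp: "x > 0" using sp N by (simp add: x_def)
  have x2: "x \<le> 1/2"
  proof -
    have "x = \<gamma>*N / C" using Cp by (simp add: x_def s_def field_simps)
    also have "\<dots> \<le> \<gamma>*N / (2*N*\<gamma>)" using N g r Cp
      by (intro divide_left_mono) (auto simp: C_def)
    also have "\<dots> = 1/2" using N g by simp
    finally show ?thesis .
  qed
  define k where "k = 1 - 2 * s * N"
  have kx: "k = 1 - x" by (simp add: k_def x_def)
  have kp: "k > 0" using x2 kx by simp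
  define C2 where "C2 = (\<Sum>i<n. (c i)^2)"
  have C2p: "C2 \<ge> 0" unfolding C2_def by (simp add: sum_nonneg)
  have "measure (gauss_n N n) A \<le> exp (s * C2 / k - s * (real n * (\<rho> + N + \<gamma>))) / sqrt k ^ n"
    unfolding C2_def k_def
  proof (rule chernoff[OF N _ A])
    show "1 - 2 * s * N > 0" using kp by (simp add: k_def)
    fix z assume "z \<in> A"
    then show "0 \<le> s * ((\<Sum>i<n. (c i + z i)\<^sup>2) - real n * (\<rho> + N + \<gamma>))"
      using AK sp by simp
  qed
  also have "\<dots> = exp (s * C2 / k - s * (real n * (\<rho> + N + \<gamma>)) - real n * (ln k / 2))"
    using kp by (simp add: sqrt_pow_exp exp_diff)
  also have "\<dots> \<le> exp (- real n * (\<gamma>^2 / (8 * C)))"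
  proof (subst exp_le_cancel_iff)
    have f1: "- x - 2 * x\<^sup>2 \<le> ln k" unfolding kx using xp x2 by (intro ln_one_minus_pos_lower_bound) auto
    have f2: "C2 / k \<le> C2 * (1 + 2*x)"
    proof -
      have "x * (1 - 2*x) \<ge> 0" using xp x2 by (intro mult_nonneg_nonneg) auto
      moreover have "k * (1 + 2*x) = 1 + x * (1 - 2*x)" unfolding kx by (simp add: algebra_simps)
      ultimately have "1 \<le> k * (1 + 2*x)" by simp
      then have "1 / k \<le> 1 + 2*x" using kp by (simp add: field_simps)
      then show ?thesis using C2p by (metis divide_inverse inverse_eq_divide mult_left_mono)
    qed
    have f3: "s * C2 / k \<le> s * (real n * (\<rho> + \<gamma>/4)) * (1 + 2*x)"
    proof -
      have "s * C2 / k = s * (C2 / k)" by simp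
      also have "\<dots> \<le> s * (C2 * (1 + 2*x))" using f2 sp by (intro mult_left_mono) auto
      also have "\<dots> \<le> s * (real n * (\<rho> + \<gamma>/4) * (1 + 2*x))" using C2 sp xp unfolding C2_def
        by (intro mult_left_mono mult_right_mono) auto
      finally show ?thesis by (simp add: mult.assoc)
    qed
    have f4: "- real n * (ln k / 2) \<le> real n * ((x + 2 * x^2) / 2)"
    proof -
      have "- (ln k / 2) \<le> (x + 2 * x^2) / 2" using f1 by simp
      then have "real n * (- (ln k / 2)) \<le> real n * ((x + 2 * x^2) / 2)" by (intro mult_left_mono) auto
      then show ?thesis by simp
    qed
    have phi: "s * (\<rho> + \<gamma>/4) * (1 + 2*x) - s * (\<rho> + N + \<gamma>) + (x + 2 * x^2) / 2
       = - 3 * s * \<gamma> / 4 + s^2 * (4*N*\<rho> + N*\<gamma> + 4*N^2)"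
      unfolding x_def by (simp add: algebra_simps power2_eq_square)
    have phi2: "- 3 * s * \<gamma> / 4 + s^2 * (4*N*\<rho> + N*\<gamma> + 4*N^2) \<le> - (\<gamma>^2 / (8 * C))"
    proof -
      have "4*N*\<rho> \<le> 4*N*\<rho>b" using N r by (intro mult_left_mono) auto
      moreover have "0 \<le> N*\<gamma>" using N g by simp
      ultimately have "4*N*\<rho> + N*\<gamma> + 4*N^2 \<le> C" unfolding C_def by linarith
      then have "s^2 * (4*N*\<rho> + N*\<gamma> + 4*N^2) \<le> s^2 * C" by (intro mult_left_mono) auto
      also have "s^2 * C = s * \<gamma> / 2" using Cp by (simp add: s_def power2_eq_square field_simps)
      finally have "- 3 * s * \<gamma> / 4 + s^2 * (4*N*\<rho> + N*\<gamma> + 4*N^2) \<le> - (s * \<gamma> / 4)" by simp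
      also have "s * \<gamma> / 4 = \<gamma>^2 / (8 * C)" using Cp by (simp add: s_def power2_eq_square field_simps)
      finally show ?thesis .
    qed
    have "s * C2 / k - s * (real n * (\<rho> + N + \<gamma>)) - real n * (ln k / 2)
      \<le> real n * (s * (\<rho> + \<gamma>/4) * (1 + 2*x) - s * (\<rho> + N + \<gamma>) + (x + 2 * x^2) / 2)"
    proof -
      have "real n * (s * (\<rho> + \<gamma>/4) * (1 + 2*x) - s * (\<rho> + N + \<gamma>) + (x + 2 * x^2) / 2)
        = s * (real n * (\<rho> + \<gamma>/4)) * (1 + 2*x) - s * (real n * (\<rho> + N + \<gamma>)) + real n * ((x + 2 * x^2) / 2)"
        by (simp add: algebra_simps)
      then show ?thesis using f3 f4 by linarith
    qed
    also have "\<dots> \<le> real n * (- (\<gamma>^2 / (8 * C)))"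
      unfolding phi using phi2 by (intro mult_left_mono) auto
    finally show "s * C2 / k - s * (real n * (\<rho> + N + \<gamma>)) - real n * (ln k / 2) \<le> - real n * (\<gamma>^2 / (8 * C))"
      by simp
  qed
  finally show ?thesis unfolding C_def .
qed



lemma lower_tail:
  fixes N g \<rho> \<rho>b :: real and c :: "nat \<Rightarrow> real"
  assumes N: "N > 0" and g: "g > 0" "g \<le> N" and r: "0 \<le> \<rho>" "\<rho> \<le> \<rho>b"
    and C2: "real n * \<rho> \<le> (\<Sum>i<n. (c i)^2)"
    and A: "A \<in> sets (gauss_n N n)"
    and AK: "\<And>z. z \<in> A \<Longrightarrow> (\<Sum>i<n. (c i + z i)^2) \<le> real n * (\<rho> + N - g)"
  shows "measure (gauss_n N n) A \<le> exp (- real n * (g^2 / (4 * (2*N*\<rho>b + 2*N^2))))"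
proof -
  define C where "C = 2*N*\<rho>b + 2*N^2"
  have Cp: "C > 0" using N g r unfolding C_def by (simp add: add_nonneg_pos)
  define t where "t = g / (2*C)"
  have tp: "t > 0" using g Cp by (simp add: t_def)
  define x where "x = 2 * t * N"
  have xp: "x > 0" using tp N by (simp add: x_def)
  have x1: "x \<le> 1"
  proof -
    have "x = g*N / C" using Cp by (simp add: x_def t_def field_simps)
    also have "\<dots> \<le> g*N / (2*N^2)" using N g r Cp
      by (intro divide_left_mono) (auto simp: C_def)
    also have "\<dots> = g / (2*N)" using N by (simp add: power2_eq_square)
    also have "\<dots> \<le> 1" using N g by simp
    finally show ?thesis .
  qed
  define k where "k = 1 - 2 * (-t) * N"
  have kx: "k = 1 + x" by (simp add: k_def x_def)
  have kp: "k > 0" using xp kx by simp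
  define C2 where "C2 = (\<Sum>i<n. (c i)^2)"
  have "measure (gauss_n N n) A \<le> exp ((-t) * C2 / k - (-t) * (real n * (\<rho> + N - g))) / sqrt k ^ n"
    unfolding C2_def k_def
  proof (rule chernoff[OF N _ A])
    show "1 - 2 * (-t) * N > 0" using kp by (simp add: k_def)
    fix z assume "z \<in> A"
    then show "0 \<le> (-t) * ((\<Sum>i<n. (c i + z i)\<^sup>2) - real n * (\<rho> + N - g))"
      using AK tp by (simp add: mult_nonneg_nonpos)
  qed
  also have "\<dots> = exp ((-t) * C2 / k - (-t) * (real n * (\<rho> + N - g)) - real n * (ln k / 2))"
    using kp by (simp add: sqrt_pow_exp exp_diff)
  also have "\<dots> \<le> exp (- real n * (g^2 / (4 * C)))"
  proof (subst exp_le_cancel_iff)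
    have f1: "x - x\<^sup>2 \<le> ln k" unfolding kx using xp x1 by (intro ln_one_plus_pos_lower_bound) auto
    have f2: "real n * \<rho> * (1 - x) \<le> C2 / k"
    proof -
      have "(1 - x) * k \<le> 1" unfolding kx by (simp add: algebra_simps)
      then have "1 - x \<le> 1 / k" using kp by (simp add: field_simps)
      then have "real n * \<rho> * (1 - x) \<le> real n * \<rho> * (1 / k)" using r by (intro mult_left_mono) auto
      also have "\<dots> \<le> C2 * (1 / k)" using C2 kp unfolding C2_def by (intro mult_right_mono) auto
      finally show ?thesis by simp
    qed
    have f3: "(-t) * C2 / k \<le> - t * (real n * \<rho> * (1 - x))"
    proof -
      have "t * (real n * \<rho> * (1 - x)) \<le> t * (C2 / k)" using f2 tp by (intro mult_left_mono) auto
      then show ?thesis by simp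
    qed
    have f4: "- real n * (ln k / 2) \<le> - real n * ((x - x^2) / 2)"
    proof -
      have "(x - x^2) / 2 \<le> ln k / 2" using f1 by simp
      then have "real n * ((x - x^2) / 2) \<le> real n * (ln k / 2)" by (intro mult_left_mono) auto
      then show ?thesis by simp
    qed
    have phi: "- t * \<rho> * (1 - x) + t * (\<rho> + N - g) - (x - x^2) / 2
       = - t * g + t^2 * (2*N*\<rho> + 2*N^2)"
      unfolding x_def by (simp add: algebra_simps power2_eq_square add_divide_distrib diff_divide_distrib)
    have phi2: "- t * g + t^2 * (2*N*\<rho> + 2*N^2) \<le> - (g^2 / (4 * C))"
    proof -
      have "2*N*\<rho> \<le> 2*N*\<rho>b" using N r by (intro mult_left_mono) auto
      then have "2*N*\<rho> + 2*N^2 \<le> C" unfolding C_def by linarith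
      then have "t^2 * (2*N*\<rho> + 2*N^2) \<le> t^2 * C" by (intro mult_left_mono) auto
      also have "t^2 * C = t * g / 2" using Cp by (simp add: t_def power2_eq_square field_simps)
      finally have "- t * g + t^2 * (2*N*\<rho> + 2*N^2) \<le> - (t * g / 2)" by simp
      also have "t * g / 2 = g^2 / (4 * C)" using Cp by (simp add: t_def power2_eq_square field_simps)
      finally show ?thesis .
    qed
    have "(-t) * C2 / k - (-t) * (real n * (\<rho> + N - g)) - real n * (ln k / 2)
      \<le> real n * (- t * \<rho> * (1 - x) + t * (\<rho> + N - g) - (x - x^2) / 2)"
    proof -
      have "real n * (- t * \<rho> * (1 - x) + t * (\<rho> + N - g) - (x - x^2) / 2)
        = - t * (real n * \<rho> * (1 - x)) - (-t) * (real n * (\<rho> + N - g)) + (- real n * ((x - x^2) / 2))"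
        by (simp add: algebra_simps add_divide_distrib diff_divide_distrib)
      then show ?thesis using f3 f4 by linarith
    qed
    also have "\<dots> \<le> real n * (- (g^2 / (4 * C)))"
      unfolding phi using phi2 by (intro mult_left_mono) auto
    finally show "(-t) * C2 / k - (-t) * (real n * (\<rho> + N - g)) - real n * (ln k / 2) \<le> - real n * (g^2 / (4 * C))"
      by simp
  qed
  finally show ?thesis unfolding C_def .
qed



lemma indicator_PiE_prod:
  assumes "finite I" "y \<in> extensional I"
  shows "(indicator (PiE I A) y :: ennreal) = (\<Prod>i\<in>I. indicator (A i) (y i))"
proof (cases "\<forall>i\<in>I. y i \<in> A i")
  case True
  then show ?thesis using assms by (auto simp: indicator_def PiE_iff intro!: prod.neutral)
next
  case False
  then obtain j where "j \<in> I" "y j \<notin> A j" by auto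
  then show ?thesis using assms by (auto simp: indicator_def PiE_iff prod_zero_iff)
qed

lemma translate_nn:
  fixes f :: "real \<Rightarrow> ennreal"
  assumes [measurable]: "f \<in> borel_measurable borel"
  shows "(\<integral>\<^sup>+u. f (c + u) \<partial>lborel) = (\<integral>\<^sup>+v. f v \<partial>lborel)"
proof -
  have "(\<integral>\<^sup>+v. f v \<partial>lborel) = (\<integral>\<^sup>+v. f v \<partial>distr lborel borel ((+) c))"
    by (simp add: lborel_distr_plus)
  also have "\<dots> = (\<integral>\<^sup>+u. f (c + u) \<partial>lborel)"
    by (subst nn_integral_distr) auto
  finally show ?thesis by simp
qed

lemma sets_gauss: "sets (gauss_n N n) = sets (Leb_n n)"
  unfolding gauss_n_def Leb_n_def by (intro sets_PiM_cong) auto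

lemma space_gauss: "space (gauss_n N n) = space (Leb_n n)"
  unfolding gauss_n_def Leb_n_def by (simp add: space_PiM)

lemma space_Leb: "space (Leb_n n) = PiE {..<n} (\<lambda>_. UNIV)"
  unfolding Leb_n_def by (simp add: space_PiM)

lemma shift_meas:
  "(\<lambda>z. restrict (\<lambda>i. c i + z i) {..<n}) \<in> measurable (gauss_n N n) (Leb_n n)"
proof -
  have "(\<lambda>z. restrict (\<lambda>i. c i + z i) {..<n}) \<in> measurable (Leb_n n) (Leb_n n)"
    unfolding Leb_n_def by measurable
  then show ?thesis by (simp add: measurable_cong_sets[OF sets_gauss refl])
qed

lemma gauss_shift:
  fixes N :: real and c :: "nat \<Rightarrow> real"
  assumes N: "N > 0"
  shows "distr (gauss_n N n) (Leb_n n) (\<lambda>z. restrict (\<lambda>i. c i + z i) {..<n})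
    = density (Leb_n n) (\<lambda>y. \<Prod>i<n. ennreal (normal_density (c i) (sqrt N) (y i)))"
proof -
  let ?P = "\<lambda>i. density lborel (normal_density (c i) (sqrt N))"
  interpret P: product_sigma_finite ?P
    unfolding product_sigma_finite_def
    using N by (auto intro!: prob_space_imp_sigma_finite prob_space_normal_density)
  interpret L: product_sigma_finite "\<lambda>_::nat. (lborel :: real measure)" by (rule psf_lborel)
  interpret G: product_sigma_finite "\<lambda>_::nat. density lborel (normal_density 0 (sqrt N))"
    by (rule psf_gauss[OF N])
  have setsP: "sets (PiM {..<n} ?P) = sets (Leb_n n)"
    unfolding Leb_n_def by (intro sets_PiM_cong) auto
  have box1: "emeasure (distr (gauss_n N n) (Leb_n n) (\<lambda>z. restrict (\<lambda>i. c i + z i) {..<n})) (PiE {..<n} A)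
      = (\<Prod>i<n. emeasure (?P i) (A i))" if A: "\<And>i. i \<in> {..<n} \<Longrightarrow> A i \<in> sets (?P i)" for A
  proof -
    have Ab[measurable]: "A i \<in> sets borel" if "i < n" for i using A[of i] that by simp
    have box: "PiE {..<n} A \<in> sets (Leb_n n)"
      unfolding Leb_n_def by (rule sets_PiM_I_finite) (use Ab in auto)
    have "emeasure (distr (gauss_n N n) (Leb_n n) (\<lambda>z. restrict (\<lambda>i. c i + z i) {..<n})) (PiE {..<n} A)
      = emeasure (gauss_n N n) ((\<lambda>z. restrict (\<lambda>i. c i + z i) {..<n}) -` PiE {..<n} A \<inter> space (gauss_n N n))"
      by (rule emeasure_distr[OF shift_meas box])
    also have "(\<lambda>z. restrict (\<lambda>i. c i + z i) {..<n}) -` PiE {..<n} A \<inter> space (gauss_n N n)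
       = PiE {..<n} (\<lambda>i. {u. c i + u \<in> A i})"
      unfolding space_gauss space_Leb by (auto simp: PiE_def Pi_def extensional_def)
    also have "emeasure (gauss_n N n) (PiE {..<n} (\<lambda>i. {u. c i + u \<in> A i}))
       = (\<Prod>i<n. emeasure (density lborel (normal_density 0 (sqrt N))) {u. c i + u \<in> A i})"
      unfolding gauss_n_def by (rule G.emeasure_PiM) auto
    also have "\<dots> = (\<Prod>i<n. emeasure (?P i) (A i))"
    proof (rule prod.cong[OF refl])
      fix i assume "i \<in> {..<n}"
      then have [measurable]: "A i \<in> sets borel" using Ab by auto
      have "emeasure (density lborel (normal_density 0 (sqrt N))) {u. c i + u \<in> A i}
         = (\<integral>\<^sup>+u. ennreal (normal_density 0 (sqrt N) u) * indicator {u. c i + u \<in> A i} u \<partial>lborel)"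
        by (rule emeasure_density) auto
      also have "\<dots> = (\<integral>\<^sup>+u. (\<lambda>v. ennreal (normal_density (c i) (sqrt N) v) * indicator (A i) v) (c i + u) \<partial>lborel)"
        by (intro nn_integral_cong) (simp add: normal_density_def indicator_def)
      also have "\<dots> = (\<integral>\<^sup>+v. ennreal (normal_density (c i) (sqrt N) v) * indicator (A i) v \<partial>lborel)"
        by (rule translate_nn) auto
      also have "\<dots> = emeasure (?P i) (A i)"
        by (rule emeasure_density[symmetric]) auto
      finally show "emeasure (density lborel (normal_density 0 (sqrt N))) {u. c i + u \<in> A i} = emeasure (?P i) (A i)" .
    qed
    finally show ?thesis .
  qed
  have box2: "emeasure (density (Leb_n n) (\<lambda>y. \<Prod>i<n. ennreal (normal_density (c i) (sqrt N) (y i)))) (PiE {..<n} A)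
      = (\<Prod>i<n. emeasure (?P i) (A i))" if A: "\<And>i. i \<in> {..<n} \<Longrightarrow> A i \<in> sets (?P i)" for A
  proof -
    have Ab[measurable]: "A i \<in> sets borel" if "i < n" for i using A[of i] that by simp
    have box: "PiE {..<n} A \<in> sets (Leb_n n)"
      unfolding Leb_n_def by (rule sets_PiM_I_finite) (use Ab in auto)
    have gm: "(\<lambda>y. \<Prod>i<n. ennreal (normal_density (c i) (sqrt N) (y i))) \<in> borel_measurable (Leb_n n)"
      unfolding Leb_n_def by measurable
    have "emeasure (density (Leb_n n) (\<lambda>y. \<Prod>i<n. ennreal (normal_density (c i) (sqrt N) (y i)))) (PiE {..<n} A)
      = (\<integral>\<^sup>+y. (\<Prod>i<n. ennreal (normal_density (c i) (sqrt N) (y i))) * indicator (PiE {..<n} A) y \<partial>Leb_n n)"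
      by (rule emeasure_density[OF gm box])
    also have "\<dots> = (\<integral>\<^sup>+y. (\<Prod>i<n. ennreal (normal_density (c i) (sqrt N) (y i)) * indicator (A i) (y i)) \<partial>Leb_n n)"
    proof (intro nn_integral_cong)
      fix y assume "y \<in> space (Leb_n n)"
      then have "y \<in> extensional {..<n}" by (simp add: space_Leb PiE_def)
      then show "(\<Prod>i<n. ennreal (normal_density (c i) (sqrt N) (y i))) * indicator (PiE {..<n} A) y
         = (\<Prod>i<n. ennreal (normal_density (c i) (sqrt N) (y i)) * indicator (A i) (y i))"
        by (simp add: indicator_PiE_prod prod.distrib)
    qed
    also have "\<dots> = (\<Prod>i<n. (\<integral>\<^sup>+v. ennreal (normal_density (c i) (sqrt N) v) * indicator (A i) v \<partial>lborel))"
      unfolding Leb_n_def by (rule L.product_nn_integral_prod) auto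
    also have "\<dots> = (\<Prod>i<n. emeasure (?P i) (A i))"
      by (intro prod.cong refl emeasure_density[symmetric]) auto
    finally show ?thesis .
  qed
  have "distr (gauss_n N n) (Leb_n n) (\<lambda>z. restrict (\<lambda>i. c i + z i) {..<n}) = PiM {..<n} ?P"
    apply (rule P.PiM_eqI)
      apply simp
     apply (simp add: setsP)
    apply (rule box1)
    apply blast
    done
  moreover have "density (Leb_n n) (\<lambda>y. \<Prod>i<n. ennreal (normal_density (c i) (sqrt N) (y i))) = PiM {..<n} ?P"
    apply (rule P.PiM_eqI)
      apply simp
     apply (simp add: setsP)
    apply (rule box2)
    apply blast
    done
  ultimately show ?thesis by simp
qed



lemma prod_nd:
  assumes N: "N > 0"
  shows "(\<Prod>i<n. normal_density (c i) (sqrt N) (y i)) = (1/sqrt(2*pi*N))^n * exp (- (\<Sum>i<n. (y i - c i)^2) / (2*N))"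
proof -
  have "(\<Prod>i<n. normal_density (c i) (sqrt N) (y i)) = (\<Prod>i<n. (1/sqrt(2*pi*N)) * exp (- ((y i - c i)^2) / (2*N)))"
    using N by (intro prod.cong refl) (simp add: normal_density_def)
  also have "\<dots> = (1/sqrt(2*pi*N))^n * exp (\<Sum>i<n. - ((y i - c i)^2) / (2*N))"
    by (subst exp_sum) (simp_all only: prod.distrib prod_constant card_lessThan finite_lessThan)
  also have "(\<Sum>i<n. - ((y i - c i)^2) / (2*N)) = - (\<Sum>i<n. (y i - c i)^2) / (2*N)"
    by (simp add: sum_negf sum_divide_distrib)
  finally show ?thesis .
qed

lemma gauss_le_vol:
  fixes N \<beta> :: real and c :: "nat \<Rightarrow> real"
  assumes N: "N > 0" and E: "E \<in> sets (Leb_n n)"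
    and EH: "\<And>y. y \<in> E \<Longrightarrow> real n * \<beta> \<le> (\<Sum>i<n. (y i - c i)^2)"
  shows "emeasure (gauss_n N n) {z \<in> space (gauss_n N n). restrict (\<lambda>i. c i + z i) {..<n} \<in> E}
    \<le> ennreal ((1/sqrt(2*pi*N))^n * exp (-(real n * \<beta>)/(2*N))) * emeasure (Leb_n n) E"
proof -
  let ?\<tau> = "\<lambda>z. restrict (\<lambda>i. c i + z i) {..<n}"
  let ?g = "\<lambda>y. \<Prod>i<n. ennreal (normal_density (c i) (sqrt N) (y i))"
  let ?M = "(1/sqrt(2*pi*N))^n * exp (-(real n * \<beta>)/(2*N))"
  have gm: "?g \<in> borel_measurable (Leb_n n)" unfolding Leb_n_def by measurable
  have "{z \<in> space (gauss_n N n). ?\<tau> z \<in> E} = ?\<tau> -` E \<inter> space (gauss_n N n)" by auto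
  then have "emeasure (gauss_n N n) {z \<in> space (gauss_n N n). ?\<tau> z \<in> E} = emeasure (distr (gauss_n N n) (Leb_n n) ?\<tau>) E"
    using emeasure_distr[OF shift_meas E] by simp
  also have "\<dots> = emeasure (density (Leb_n n) ?g) E" by (simp add: gauss_shift[OF N])
  also have "\<dots> = (\<integral>\<^sup>+y. ?g y * indicator E y \<partial>Leb_n n)" by (rule emeasure_density[OF gm E])
  also have "\<dots> \<le> (\<integral>\<^sup>+y. ennreal ?M * indicator E y \<partial>Leb_n n)"
  proof (intro nn_integral_mono)
    fix y
    show "?g y * indicator E y \<le> ennreal ?M * indicator E y"
    proof (cases "y \<in> E")
      case True
      have "?g y = ennreal (\<Prod>i<n. normal_density (c i) (sqrt N) (y i))" by (rule prod_ennreal) simp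
      also have "\<dots> = ennreal ((1/sqrt(2*pi*N))^n * exp (- (\<Sum>i<n. (y i - c i)^2) / (2*N)))"
        by (simp add: prod_nd[OF N])
      also have "\<dots> \<le> ennreal ?M"
      proof (intro ennreal_leI mult_left_mono)
        show "exp (- (\<Sum>i<n. (y i - c i)^2) / (2*N)) \<le> exp (-(real n * \<beta>)/(2*N))"
          using EH[OF True] N by (simp add: divide_right_mono)
      qed (use N in simp)
      finally show ?thesis using True by simp
    qed simp
  qed
  also have "\<dots> = ennreal ?M * emeasure (Leb_n n) E" by (rule nn_integral_cmult_indicator[OF E])
  finally show ?thesis .
qed



lemma shell_meas: "shell n a r1 r2 \<in> sets (Leb_n n)"
  unfolding shell_def vnorm_def Leb_n_def by measurable

lemma meas_sum_set:
  fixes P :: "real \<Rightarrow> bool"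
  assumes [measurable]: "Measurable.pred borel P"
  shows "{z \<in> space (gauss_n N n). P (\<Sum>i<n. (c i + z i)^2)} \<in> sets (gauss_n N n)"
proof -
  have "{z \<in> space (Leb_n n). P (\<Sum>i<n. (c i + z i)^2)} \<in> sets (Leb_n n)"
    unfolding Leb_n_def by measurable
  then show ?thesis by (simp add: sets_gauss space_gauss)
qed

lemma prob_gauss: "N > 0 \<Longrightarrow> prob_space (gauss_n N n)"
  unfolding gauss_n_def by (intro prob_space_PiM prob_space_normal_density) simp

lemma one_codeword:
  fixes N \<gamma> \<rho>b \<rho> :: real and n :: nat and c :: "nat \<Rightarrow> real" and D
  assumes N: "N > 0" and g: "\<gamma> > 0" "\<gamma> < N" and r: "0 \<le> \<rho>" "\<rho> \<le> \<rho>b" and n: "n > 0"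
    and D: "D \<in> sets (Leb_n n)"
    and cS: "c \<in> shell n (\<lambda>_. 0) (sqrt (real n * \<rho>)) (sqrt (real n * \<rho>) + \<gamma>)"
    and err: "measure (gauss_n N n) {z \<in> space (gauss_n N n). restrict (\<lambda>i. c i + z i) {..<n} \<notin> D} \<le> 1/4"
    and ev_u: "exp (- real n * (\<gamma>^2 / (8 * (4*N*\<rho>b + 2*N*\<gamma> + 4*N^2)))) \<le> 1/16"
    and ev_l: "exp (- real n * (\<gamma>^2 / (4 * (2*N*\<rho>b + 2*N^2)))) \<le> 1/16"
    and ev_h: "exp (- real n * ((\<gamma>/2)^2 / (4 * (2*N*\<rho>b + 2*N^2)))) \<le> 1/16"
    and ev3: "2 * \<gamma> * sqrt (real n * \<rho>b) + \<gamma>^2 \<le> real n * \<gamma> / 4"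
    and ev4: "exp (1 - real n * \<gamma> / (4*N)) \<le> 1/2"
  shows "ennreal ((real n * pi * (N - \<gamma>)) powr (real n / 2) / Gamma (real n / 2 + 1))
    \<le> emeasure (Leb_n n) (D \<inter> shell n (\<lambda>_. 0) (sqrt (real n * (\<rho> + N - \<gamma>))) (sqrt (real n * (\<rho> + N + \<gamma>)))
         \<inter> {y \<in> space (Leb_n n). real n * (N - \<gamma>/2) \<le> (\<Sum>i<n. (y i - c i)^2)})"
proof -
  let ?G = "gauss_n N n" and ?L = "Leb_n n"
  let ?\<tau> = "\<lambda>z. restrict (\<lambda>i. c i + z i) {..<n}"
  define T where "T = shell n (\<lambda>_. 0) (sqrt (real n * (\<rho> + N - \<gamma>))) (sqrt (real n * (\<rho> + N + \<gamma>)))"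
  define H where "H = {y \<in> space (Leb_n n). real n * (N - \<gamma>/2) \<le> (\<Sum>i<n. (y i - c i)^2)}"
  define E where "E = D \<inter> T \<inter> H"
  interpret G: prob_space ?G by (rule prob_gauss[OF N])
  have Hm: "H \<in> sets ?L" unfolding H_def Leb_n_def by measurable
  have Em: "E \<in> sets ?L" unfolding E_def T_def using D Hm shell_meas by auto
  define C2 where "C2 = (\<Sum>i<n. (c i)^2)"
  have C2p: "0 \<le> C2" unfolding C2_def by (simp add: sum_nonneg)
  have vc: "sqrt (real n * \<rho>) \<le> sqrt C2" "sqrt C2 \<le> sqrt (real n * \<rho>) + \<gamma>"
    using cS by (simp_all add: shell_def vnorm_def C2_def)
  have C2l: "real n * \<rho> \<le> C2" using vc(1) by simp
  have C2u: "C2 \<le> real n * (\<rho> + \<gamma>/4)"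
  proof -
    have "C2 = (sqrt C2)^2" using C2p by simp
    also have "\<dots> \<le> (sqrt (real n * \<rho>) + \<gamma>)^2" using vc(2) C2p by (intro power_mono) auto
    also have "\<dots> = real n * \<rho> + 2 * \<gamma> * sqrt (real n * \<rho>) + \<gamma>^2"
      using r by (simp add: power2_eq_square algebra_simps)
    also have "\<dots> \<le> real n * \<rho> + 2 * \<gamma> * sqrt (real n * \<rho>b) + \<gamma>^2"
      using r g by (auto intro!: mult_left_mono mult_left_mono real_sqrt_le_mono)
    also have "\<dots> \<le> real n * (\<rho> + \<gamma>/4)" using ev3 by (simp add: algebra_simps)
    finally show ?thesis .
  qed
  define Ae where "Ae = {z \<in> space ?G. ?\<tau> z \<notin> D}"
  define Au where "Au = {z \<in> space ?G. real n * (\<rho> + N + \<gamma>) < (\<Sum>i<n. (c i + z i)^2)}"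
  define Al where "Al = {z \<in> space ?G. (\<Sum>i<n. (c i + z i)^2) < real n * (\<rho> + N - \<gamma>)}"
  define Ah where "Ah = {z \<in> space ?G. (\<Sum>i<n. ((\<lambda>_. 0) i + z i)^2) < real n * (0 + N - \<gamma>/2)}"
  have Aem: "Ae \<in> sets ?G"
  proof -
    have "Ae = ?\<tau> -` (space ?L - D) \<inter> space ?G" unfolding Ae_def using measurable_space[OF shift_meas] by auto
    then show ?thesis using measurable_sets[OF shift_meas] D by auto
  qed
  have Aum: "Au \<in> sets ?G" unfolding Au_def by (rule meas_sum_set) simp
  have Alm: "Al \<in> sets ?G" unfolding Al_def by (rule meas_sum_set) simp
  have Ahm: "Ah \<in> sets ?G" unfolding Ah_def by (rule meas_sum_set) simp
  have pu: "measure ?G Au \<le> 1/16"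
    using upper_tail[OF N g(1) r C2u[unfolded C2_def] Aum] ev_u unfolding Au_def by fastforce
  have pl: "measure ?G Al \<le> 1/16"
    using lower_tail[OF N g(1) less_imp_le[OF g(2)] r C2l[unfolded C2_def] Alm] ev_l unfolding Al_def by fastforce
  have ph: "measure ?G Ah \<le> 1/16"
  proof -
    have "measure ?G Ah \<le> exp (- real n * ((\<gamma>/2)^2 / (4 * (2*N*\<rho>b + 2*N^2))))"
      by (rule lower_tail[where c="\<lambda>_. 0" and \<rho>=0, OF N _ _ _ _ _ Ahm]) (use g r in \<open>auto simp: Ah_def\<close>)
    then show ?thesis using ev_h by linarith
  qed
  have pe: "measure ?G Ae \<le> 1/4" using err unfolding Ae_def .
  define Bad where "Bad = Ae \<union> Au \<union> Al \<union> Ah"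
  have Badm: "Bad \<in> sets ?G" unfolding Bad_def using Aem Aum Alm Ahm by auto
  have pBad: "measure ?G Bad \<le> 7/16"
  proof -
    have "measure ?G Bad \<le> measure ?G (Ae \<union> Au \<union> Al) + measure ?G Ah"
      unfolding Bad_def using Aem Aum Alm Ahm by (intro measure_subadditive) (auto simp: G.emeasure_finite)
    also have "measure ?G (Ae \<union> Au \<union> Al) \<le> measure ?G (Ae \<union> Au) + measure ?G Al"
      using Aem Aum Alm by (intro measure_subadditive) (auto simp: G.emeasure_finite)
    also have "measure ?G (Ae \<union> Au) \<le> measure ?G Ae + measure ?G Au"
      using Aem Aum by (intro measure_subadditive) (auto simp: G.emeasure_finite)
    finally show ?thesis using pe pu pl ph by linarith
  qed
  have good: "space ?G - Bad \<subseteq> {z \<in> space ?G. ?\<tau> z \<in> E}"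
  proof
    fix z assume z: "z \<in> space ?G - Bad"
    then have zs: "z \<in> space ?G" by simp
    have tzs: "?\<tau> z \<in> space ?L" by (simp add: space_Leb)
    have sumeq: "(\<Sum>i<n. (?\<tau> z i - 0)^2) = (\<Sum>i<n. (c i + z i)^2)" by (intro sum.cong) auto
    have sumeq2: "(\<Sum>i<n. (?\<tau> z i - c i)^2) = (\<Sum>i<n. (0 + z i)^2)" by (intro sum.cong) auto
    have "?\<tau> z \<in> D" using z unfolding Bad_def Ae_def by auto
    moreover have "?\<tau> z \<in> T"
    proof -
      have "\<not> real n * (\<rho> + N + \<gamma>) < (\<Sum>i<n. (c i + z i)^2)" "\<not> (\<Sum>i<n. (c i + z i)^2) < real n * (\<rho> + N - \<gamma>)"
        using z unfolding Bad_def Au_def Al_def by auto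
      then show ?thesis unfolding T_def shell_def vnorm_def sumeq using tzs
        by (auto intro!: real_sqrt_le_mono)
    qed
    moreover have "?\<tau> z \<in> H"
    proof -
      have "\<not> (\<Sum>i<n. (0 + z i)^2) < real n * (0 + N - \<gamma>/2)" using z unfolding Bad_def Ah_def by auto
      then show ?thesis unfolding H_def using tzs sumeq2 by simp
    qed
    ultimately show "z \<in> {z \<in> space ?G. ?\<tau> z \<in> E}" using zs unfolding E_def by simp
  qed
  have "measure ?G (space ?G - Bad) = 1 - measure ?G Bad" using G.prob_compl[OF Badm] by simp
  then have "9/16 \<le> measure ?G (space ?G - Bad)" using pBad by simp
  also have "\<dots> \<le> measure ?G {z \<in> space ?G. ?\<tau> z \<in> E}"
  proof (intro G.finite_measure_mono[OF good])
    have "{z \<in> space ?G. ?\<tau> z \<in> E} = ?\<tau> -` E \<inter> space ?G" by auto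
    then show "{z \<in> space ?G. ?\<tau> z \<in> E} \<in> sets ?G" using measurable_sets[OF shift_meas Em] by simp
  qed
  finally have half: "1/2 \<le> measure ?G {z \<in> space ?G. ?\<tau> z \<in> E}" by simp
  define M where "M = (1/sqrt(2*pi*N))^n * exp (-(real n * (N - \<gamma>/2))/(2*N))"
  have Mp: "M > 0" unfolding M_def using N by simp
  have EH: "\<And>y. y \<in> E \<Longrightarrow> real n * (N - \<gamma>/2) \<le> (\<Sum>i<n. (y i - c i)^2)" unfolding E_def H_def by auto
  have "ennreal (1/2) \<le> ennreal (measure ?G {z \<in> space ?G. ?\<tau> z \<in> E})" using half by (rule ennreal_leI)
  also have "\<dots> = emeasure ?G {z \<in> space ?G. ?\<tau> z \<in> E}" by (simp add: G.emeasure_eq_measure)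
  also have "\<dots> \<le> ennreal M * emeasure ?L E" unfolding M_def by (rule gauss_le_vol[OF N Em EH])
  finally have key: "ennreal (1/2) \<le> ennreal M * emeasure ?L E" .
  define Vb where "Vb = (real n * pi * (N - \<gamma>)) powr (real n / 2) / Gamma (real n / 2 + 1)"
  have VM: "Vb * M \<le> 1/2"
    using vol_gauss_bound[OF g n] ev4 unfolding Vb_def M_def by linarith
  have "ennreal Vb \<le> emeasure ?L E"
  proof (cases "emeasure ?L E = \<infinity>")
    case False
    then obtain e where e: "emeasure ?L E = ennreal e" "e \<ge> 0" by (cases "emeasure ?L E") auto
    have "ennreal (1/2) \<le> ennreal (M * e)" using key e Mp by (simp add: ennreal_mult)
    then have "1/2 \<le> M * e" using Mp e by (subst (asm) ennreal_le_iff) auto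
    then have "Vb * M \<le> e * M" using VM by (simp add: mult.commute)
    then have "Vb \<le> e" using Mp by simp
    then show ?thesis using e by simp
  qed simp
  then show ?thesis unfolding Vb_def E_def T_def H_def .
qed



lemma ev_exp_small:
  fixes \<kappa> \<epsilon> :: real assumes k: "\<kappa> > 0" and e: "\<epsilon> > 0"
  shows "eventually (\<lambda>n. exp (- real n * \<kappa>) \<le> \<epsilon>) sequentially"
proof -
  obtain m :: nat where m: "1 / (\<kappa> * \<epsilon>) < real m" using reals_Archimedean2 by blast
  show ?thesis
  proof (rule eventually_sequentiallyI[of m])
    fix n assume "m \<le> n"
    then have "1 / (\<kappa> * \<epsilon>) < real n" using m by linarith
    then have "1 / \<epsilon> < real n * \<kappa>" using k e by (simp add: field_simps)
    also have "real n * \<kappa> \<le> exp (real n * \<kappa>)" using exp_ge_add_one_self[of "real n * \<kappa>"] by linarith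
    finally have "1 / \<epsilon> < exp (real n * \<kappa>)" .
    then have "1 / exp (real n * \<kappa>) < \<epsilon>" using e by (simp add: field_simps)
    then show "exp (- real n * \<kappa>) \<le> \<epsilon>" by (simp add: exp_minus field_simps)
  qed
qed

lemma ev_sqrt:
  fixes \<gamma> \<rho>b :: real assumes g: "\<gamma> > 0" and r: "\<rho>b \<ge> 0"
  shows "eventually (\<lambda>n. 2 * \<gamma> * sqrt (real n * \<rho>b) + \<gamma>^2 \<le> real n * \<gamma> / 4) sequentially"
proof -
  define B where "B = 8 * sqrt \<rho>b + 2 * \<gamma> + 2"
  have B2: "B \<ge> 2" unfolding B_def using g r by simp
  obtain m :: nat where m: "B^2 < real m" using reals_Archimedean2 by blast
  show ?thesis
  proof (rule eventually_sequentiallyI[of m])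
    fix n assume "m \<le> n"
    then have "B^2 < real n" using m by linarith
    define u where "u = sqrt (real n)"
    have uB: "B \<le> u" unfolding u_def using \<open>B^2 < real n\<close> B2 real_le_rsqrt by fastforce
    have u0: "u \<ge> 2" using uB B2 by simp
    have nu: "real n = u^2" unfolding u_def by simp
    have s: "sqrt (real n * \<rho>b) = u * sqrt \<rho>b" unfolding u_def by (simp add: real_sqrt_mult)
    have "real n * \<gamma> / 4 = (\<gamma> * u / 4) * u" unfolding nu by (simp add: power2_eq_square)
    also have "\<dots> \<ge> (\<gamma> * u / 4) * B" using uB g u0 by (intro mult_left_mono) auto
    finally have "(\<gamma> * u / 4) * B \<le> real n * \<gamma> / 4" .
    moreover have "(\<gamma> * u / 4) * B = 2 * \<gamma> * (u * sqrt \<rho>b) + \<gamma> * u * (2 * \<gamma> + 2) / 4"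
      unfolding B_def by (simp add: algebra_simps)
    moreover have "\<gamma>^2 \<le> \<gamma> * u * (2 * \<gamma> + 2) / 4"
    proof -
      have "\<gamma> * 2 * (2 * \<gamma>) \<le> \<gamma> * u * (2 * \<gamma> + 2)" using g u0
        by (intro mult_mono) auto
      then show ?thesis by (simp add: power2_eq_square)
    qed
    ultimately show "2 * \<gamma> * sqrt (real n * \<rho>b) + \<gamma>^2 \<le> real n * \<gamma> / 4" unfolding s by linarith
  qed
qed



lemma shell_finite: "emeasure (Leb_n n) (shell n (\<lambda>_. 0) r1 r2) < \<infinity>"
proof -
  interpret L: product_sigma_finite "\<lambda>_::nat. (lborel :: real measure)" by (rule psf_lborel)
  define r where "r = \<bar>r2\<bar>"
  have sub: "shell n (\<lambda>_. 0) r1 r2 \<subseteq> PiE {..<n} (\<lambda>_. {-r..r})"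
  proof
    fix y assume y: "y \<in> shell n (\<lambda>_. 0) r1 r2"
    then have ys: "y \<in> PiE {..<n} (\<lambda>_. UNIV)" and vn: "sqrt (\<Sum>i<n. (y i)^2) \<le> r2"
      by (auto simp: shell_def vnorm_def space_Leb)
    have "\<bar>y i\<bar> \<le> r" if "i < n" for i
    proof -
      have "\<bar>y i\<bar> = sqrt ((y i)^2)" by simp
      also have "\<dots> \<le> sqrt (\<Sum>i<n. (y i)^2)" using that
        by (intro real_sqrt_le_mono member_le_sum) auto
      also have "\<dots> \<le> r" using vn by (simp add: r_def)
      finally show ?thesis .
    qed
    then show "y \<in> PiE {..<n} (\<lambda>_. {-r..r})" using ys by (auto simp: PiE_def Pi_def abs_le_iff; fastforce)
  qed
  have "emeasure (Leb_n n) (PiE {..<n} (\<lambda>_. {-r..r})) = (\<Prod>i<n. emeasure lborel {-r..r})"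
    unfolding Leb_n_def by (rule L.emeasure_PiM) auto
  also have "\<dots> = (\<Prod>i<n. ennreal (2*r))" using r_def by simp
  also have "\<dots> = ennreal ((2*r)^n)" by (simp add: r_def ennreal_power)
  also have "\<dots> < \<infinity>" by simp
  finally have "emeasure (Leb_n n) (PiE {..<n} (\<lambda>_. {-r..r})) < \<infinity>" .
  moreover have "PiE {..<n} (\<lambda>_. {-r..r}) \<in> sets (Leb_n n)"
    unfolding Leb_n_def by (rule sets_PiM_I_finite) auto
  ultimately show ?thesis using emeasure_mono[OF sub] by (meson le_less_trans)
qed



theorem lemma9:
  fixes N R \<rho>bar \<gamma> :: real
    and dec :: "nat \<Rightarrow> (nat \<Rightarrow> real) \<Rightarrow> 'm"
    and x :: "nat \<Rightarrow> 'm \<Rightarrow> (nat \<Rightarrow> real)"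
    and p \<rho> :: "nat \<Rightarrow> real"
    and S :: "nat \<Rightarrow> 'm set"
  assumes "N > 0" "R > 0" "\<rho>bar > 0" "0 < \<gamma>" "\<gamma> < N"
    and dec_meas: "\<And>n. dec n \<in> measurable (Leb_n n) (count_space UNIV)"
    and p_lim: "p \<longlonglongrightarrow> 0"
    and rho: "\<And>n. 0 \<le> \<rho> n \<and> \<rho> n \<le> \<rho>bar"
    and S_fin: "\<And>n. finite (S n)"
    and S_card: "\<And>n. real (card (S n)) \<ge> exp (real n * (R - \<gamma>))"
    and S_shell: "\<And>n w. w \<in> S n \<Longrightarrow>
       x n w \<in> shell n (\<lambda>_. 0) (sqrt (real n * \<rho> n)) (sqrt (real n * \<rho> n) + \<gamma>)"
    and S_err: "\<And>n w. w \<in> S n \<Longrightarrow> err_prob N n (dec n) (x n w) w \<le> (2 / \<gamma>) * p n"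
  shows "\<forall>\<^sub>F n in sequentially.
     measure (Leb_n n)
       ((\<Union>w\<in>S n. dec_region n (dec n) w) \<inter>
        shell n (\<lambda>_. 0) (sqrt (real n * (\<rho> n + N - \<gamma>))) (sqrt (real n * (\<rho> n + N + \<gamma>))))
     \<ge> exp (real n * (R - \<gamma>)) * (real n * pi * (N - \<gamma>)) powr (real n / 2)
         / Gamma (real n / 2 + 1)"
proof -
  note N = \<open>N > 0\<close> and g = \<open>0 < \<gamma>\<close> \<open>\<gamma> < N\<close> and rb = \<open>\<rho>bar > 0\<close>
  define \<kappa>u where "\<kappa>u = \<gamma>^2 / (8 * (4*N*\<rho>bar + 2*N*\<gamma> + 4*N^2))"
  define \<kappa>l where "\<kappa>l = \<gamma>^2 / (4 * (2*N*\<rho>bar + 2*N^2))"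
  define \<kappa>h where "\<kappa>h = (\<gamma>/2)^2 / (4 * (2*N*\<rho>bar + 2*N^2))"
  have kpos: "\<kappa>u > 0" "\<kappa>l > 0" "\<kappa>h > 0"
    unfolding \<kappa>u_def \<kappa>l_def \<kappa>h_def using N g rb by (simp_all add: add_pos_pos)
  have E1: "eventually (\<lambda>n. exp (- real n * \<kappa>u) \<le> 1/16) sequentially"
    by (rule ev_exp_small) (use kpos in auto)
  have E2: "eventually (\<lambda>n. exp (- real n * \<kappa>l) \<le> 1/16) sequentially"
    by (rule ev_exp_small) (use kpos in auto)
  have E3: "eventually (\<lambda>n. exp (- real n * \<kappa>h) \<le> 1/16) sequentially"
    by (rule ev_exp_small) (use kpos in auto)
  have E4: "eventually (\<lambda>n. 2 * \<gamma> * sqrt (real n * \<rho>bar) + \<gamma>^2 \<le> real n * \<gamma> / 4) sequentially"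
    by (rule ev_sqrt) (use g rb in auto)
  have E5: "eventually (\<lambda>n. exp (1 - real n * \<gamma> / (4*N)) \<le> 1/2) sequentially"
  proof -
    have "eventually (\<lambda>n. exp (- real n * (\<gamma> / (4*N))) \<le> exp (-1) / 2) sequentially"
      by (rule ev_exp_small) (use N g in auto)
    then show ?thesis
    proof (rule eventually_mono)
      fix n assume "exp (- real n * (\<gamma> / (4*N))) \<le> exp (-1) / 2"
      then have "exp 1 * exp (- real n * (\<gamma> / (4*N))) \<le> exp 1 * (exp (-1) / 2)" by simp
      also have "exp 1 * (exp (-1) / 2) = (1/2::real)" by (simp add: exp_minus field_simps)
      also have "exp 1 * exp (- real n * (\<gamma> / (4*N))) = exp (1 - real n * \<gamma> / (4*N))"
        by (simp add: exp_add[symmetric])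
      finally show "exp (1 - real n * \<gamma> / (4*N)) \<le> 1/2" by simp
    qed
  qed
  have E6: "eventually (\<lambda>n. dist (p n) 0 < \<gamma>/8) sequentially"
    using p_lim g unfolding tendsto_iff by (metis divide_pos_pos zero_less_numeral)
  have E7: "eventually (\<lambda>n. n > 0) sequentially" by (rule eventually_gt_at_top)
  have all: "eventually (\<lambda>n. exp (- real n * \<kappa>u) \<le> 1/16 \<and> exp (- real n * \<kappa>l) \<le> 1/16 \<and>
     exp (- real n * \<kappa>h) \<le> 1/16 \<and> 2 * \<gamma> * sqrt (real n * \<rho>bar) + \<gamma>^2 \<le> real n * \<gamma> / 4 \<and>
     exp (1 - real n * \<gamma> / (4*N)) \<le> 1/2 \<and> dist (p n) 0 < \<gamma>/8 \<and> n > 0) sequentially"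
    by (intro eventually_conj E1 E2 E3 E4 E5 E6 E7)
  show ?thesis
    using all
  proof (rule eventually_mono, elim conjE)
    fix n
    assume ev_u: "exp (- real n * \<kappa>u) \<le> 1/16" and ev_l: "exp (- real n * \<kappa>l) \<le> 1/16"
      and ev_h: "exp (- real n * \<kappa>h) \<le> 1/16"
      and ev3: "2 * \<gamma> * sqrt (real n * \<rho>bar) + \<gamma>^2 \<le> real n * \<gamma> / 4"
      and ev4: "exp (1 - real n * \<gamma> / (4*N)) \<le> 1/2" and pn: "dist (p n) 0 < \<gamma>/8" and n: "n > 0"
    let ?L = "Leb_n n"
    define T where "T = shell n (\<lambda>_. 0) (sqrt (real n * (\<rho> n + N - \<gamma>))) (sqrt (real n * (\<rho> n + N + \<gamma>)))"
    define D where "D = (\<lambda>w. dec_region n (dec n) w)"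
    define F where "F = (\<lambda>w. D w \<inter> T \<inter> {y \<in> space ?L. real n * (N - \<gamma>/2) \<le> (\<Sum>i<n. (y i - x n w i)^2)})"
    define Vb where "Vb = (real n * pi * (N - \<gamma>)) powr (real n / 2) / Gamma (real n / 2 + 1)"
    have Vb0: "Vb \<ge> 0" unfolding Vb_def by simp
    have Dm: "D w \<in> sets ?L" for w
    proof -
      have "D w = dec n -` {w} \<inter> space ?L" by (auto simp: D_def dec_region_def)
      then show ?thesis using measurable_sets[OF dec_meas[of n], of "{w}"] by simp
    qed
    have Tm: "T \<in> sets ?L" unfolding T_def by (rule shell_meas)
    have Fm: "F w \<in> sets ?L" for w
    proof -
      have "{y \<in> space ?L. real n * (N - \<gamma>/2) \<le> (\<Sum>i<n. (y i - x n w i)^2)} \<in> sets ?L"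
        unfolding Leb_n_def by measurable
      then show ?thesis unfolding F_def using Dm Tm by auto
    qed
    have pbound: "(2 / \<gamma>) * p n \<le> 1/4"
    proof -
      have "p n < \<gamma>/8" using pn by (simp add: dist_real_def)
      then have "(2 / \<gamma>) * p n \<le> (2 / \<gamma>) * (\<gamma>/8)" using g by (intro mult_left_mono) auto
      also have "\<dots> = 1/4" using g by simp
      finally show ?thesis .
    qed
    have Fw: "ennreal Vb \<le> emeasure ?L (F w)" if w: "w \<in> S n" for w
    proof -
      have "ennreal Vb \<le> emeasure ?L (D w \<inter> shell n (\<lambda>_. 0) (sqrt (real n * (\<rho> n + N - \<gamma>))) (sqrt (real n * (\<rho> n + N + \<gamma>)))
         \<inter> {y \<in> space ?L. real n * (N - \<gamma>/2) \<le> (\<Sum>i<n. (y i - x n w i)^2)})"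
        unfolding Vb_def
      proof (rule one_codeword[OF N g conjunct1[OF rho] conjunct2[OF rho] n Dm S_shell[OF w]])
        show "measure (gauss_n N n) {z \<in> space (gauss_n N n). restrict (\<lambda>i. x n w i + z i) {..<n} \<notin> D w} \<le> 1/4"
          using S_err[OF w] pbound unfolding err_prob_def D_def by linarith
      qed (use ev_u ev_l ev_h ev3 ev4 in \<open>simp_all add: \<kappa>u_def \<kappa>l_def \<kappa>h_def\<close>)
      then show ?thesis unfolding F_def T_def .
    qed
    have Um: "(\<Union>w\<in>S n. D w) \<inter> T \<in> sets ?L" using Dm S_fin Tm by (intro sets.Int sets.finite_UN) auto
    have disj: "disjoint_family_on F (S n)"
      unfolding disjoint_family_on_def F_def D_def dec_region_def by auto
    have "ennreal (real (card (S n)) * Vb) = (\<Sum>w\<in>S n. ennreal Vb)"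
    proof -
      have "(\<Sum>w\<in>S n. ennreal Vb) = ennreal (\<Sum>w\<in>S n. Vb)" by (rule sum_ennreal) (use Vb0 in auto)
      then show ?thesis by simp
    qed
    also have "\<dots> \<le> (\<Sum>w\<in>S n. emeasure ?L (F w))" using Fw by (intro sum_mono) auto
    also have "\<dots> = emeasure ?L (\<Union>w\<in>S n. F w)" using Fm disj S_fin by (intro sum_emeasure) auto
    also have "\<dots> \<le> emeasure ?L ((\<Union>w\<in>S n. D w) \<inter> T)"
      using Um by (intro emeasure_mono) (auto simp: F_def)
    finally have lb: "ennreal (real (card (S n)) * Vb) \<le> emeasure ?L ((\<Union>w\<in>S n. D w) \<inter> T)" .
    have fin: "emeasure ?L ((\<Union>w\<in>S n. D w) \<inter> T) < \<infinity>"
    proof -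
      have "emeasure ?L ((\<Union>w\<in>S n. D w) \<inter> T) \<le> emeasure ?L T" using Tm by (intro emeasure_mono) auto
      also have "\<dots> < \<infinity>" unfolding T_def by (rule shell_finite)
      finally show ?thesis .
    qed
    have "real (card (S n)) * Vb \<le> measure ?L ((\<Union>w\<in>S n. D w) \<inter> T)"
      using lb fin Vb0 by (simp add: measure_def enn2real_le ennreal_le_iff2 less_top)
           (metis enn2real_ennreal enn2real_mono less_top mult_nonneg_nonneg of_nat_0_le_iff)
    moreover have "exp (real n * (R - \<gamma>)) * Vb \<le> real (card (S n)) * Vb"
      using S_card Vb0 by (intro mult_right_mono) auto
    ultimately show "exp (real n * (R - \<gamma>)) * (real n * pi * (N - \<gamma>)) powr (real n / 2) / Gamma (real n / 2 + 1)
      \<le> measure ?L ((\<Union>w\<in>S n. dec_region n (dec n) w) \<inter>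
        shell n (\<lambda>_. 0) (sqrt (real n * (\<rho> n + N - \<gamma>))) (sqrt (real n * (\<rho> n + N + \<gamma>))))"
      unfolding Vb_def D_def T_def by simp
  qed
qed


end
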